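(* Let $p>2$ and $K/\mathbb{Q}_p$ finite unramified. For each $p$-bounded and non-Steinberg Hodge type $\underline{r}$, there exist a non-scalar tame inertial type $\tau$ and a profile $J\subset\mathbb{Z}/f'\mathbb{Z}$ such that $\underline{r}\sim r(\tau,J)$.
   Context: $K/\mathbb{Q}_p$ is unramified of degree $f$ with residue field $k$, embeddings $\kappa_i:k\hookrightarrow\overline{\mathbb{F}}_p$ indexed by $i\in\mathbb{Z}/f\mathbb{Z}$ with $\kappa_{i+1}^p=\kappa_i$, and $\omega_i$ the fundamental character of level $f$ attached to $\kappa_i$. A Hodge type is a tuple of integers $\underline{r}=(r_{i,1}\ge r_{i,2})_{i\in\mathbb{Z}/f\mathbb{Z}}$; it is $p$-bounded if $r_{i,1}-r_{i,2}\le p$ for all $i$, Steinberg if $r_{i,1}-r_{i,2}=p$ for all $i$. Write $\underline{r}\sim\underline{r}'$ if $r'_{i,j}=r_{i,j}+\lambda_i$ for some $(\lambda_i)\in\mathbb{Z}^f$ with $\sum_{i=0}^{f-1}p^{f-i}\lambda_i\equiv0\pmod{p^f-1}$ (equivalently $\prod_i\omega_i^{\lambda_i}$ trivial). $E$ is a sufficiently large coefficient field with ring of integers $\mathcal{O}$ and residue field $\mathbb{F}$. A non-scalar tame inertial type $\tau=\eta\oplus\eta':I_K\to\mathrm{GL}_2(\mathcal{O})$ is principal series if $\eta,\eta'$ extend to $G_K$ and cuspidal otherwise ($\eta'=\eta^{p^f}$); $f'=f$ resp. $2f$. Let $k'$ be the degree $f'$ extension of $k$, embeddings $\kappa'_i$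 ($i\in\mathbb{Z}/f'\mathbb{Z}$, $(\kappa'_{i+1})^p=\kappa'_i$, extending $\kappa_{i\bmod f}$), $\omega'_i$ the corresponding fundamental characters of level $f'$ of $I_K$ and $\widetilde\omega'_i$ their Teichmüller lifts. Define $\gamma_i\in[0,p-1]$ by $\eta\eta'^{-1}=\prod_{i\in\mathbb{Z}/f'\mathbb{Z}}(\widetilde\omega'_i)^{\gamma_i}$. A profile is any $J\subset\mathbb{Z}/f'\mathbb{Z}$ (principal series) or one with $i\in J\iff i+f\notin J$ (cuspidal). With $\delta_S$ the indicator of $S$: $s_{J,i}=p-1-\gamma_i-\delta_{J^c}(i)$ if $i-1\in J$, $s_{J,i}=\gamma_i-\delta_J(i)$ if $i-1\notin J$ ($f$-periodic, in $[-1,p-1]$); $t_{J,i}=\gamma_i+\delta_{J^c}(i)$ if $i-1\in J$, $0$ otherwise. $\Theta_J:k^\times\to\mathbb{F}^\times$ is the character with $\Theta_J\circ N_{k'/k}=\eta'\prod_{i}(\kappa'_i)^{t_{J,i}}$ ($\eta'$ viewed as a character of $k'^\times$ via the Artin map of the totally tamely ramified extension trivializing $\tau$); via local class field theory (uniformizers $\leftrightarrow$ geometric Frobenius) write $\Theta_J=\prod_{i=0}^{f-1}\omega_i^{\theta_{J,i}}$. Then $r(\tau,J)$ is the Hodge type with $r_{i,1}=1-\theta_{J,i}$, $r_{i,2}=-s_{J,i}-\theta_{J,i}$, well defined up to $\sim$. *)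

theory Defs
  imports Main "HOL-Number_Theory.Cong"
begin

text \<open>
  Indices in Z/fZ (resp. Z/f'Z) are represented by naturals
  i < f (resp. i < f'). A tame character of I_K of level n with values in O^x (a Teichmueller
  lift) or in F^x is encoded by its exponent e (an integer taken modulo p^n - 1) with respect
  to the fundamental character of level n attached to the embedding kappa'_0; since
  (kappa'_(i+1))^p = kappa'_i, one has omega'_i = omega'_0^(p^(n-i)). Characters of the
  residue field are encoded likewise (kappa'_i corresponds to omega'_i under the Artin map
  normalised with uniformizers corresponding to geometric Frobenius).
\<close>

text \<open>Hodge types: r i = (r_(i,1), r_(i,2)) for i < f.\<close>
definition hodge_type :: "nat \<Rightarrow> (nat \<Rightarrow> int \<times> int) \<Rightarrow> bool" where
  "hodge_type f r \<longleftrightarrow> (\<forall>i<f. snd (r i) \<le> fst (r i))"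

definition p_bounded :: "nat \<Rightarrow> nat \<Rightarrow> (nat \<Rightarrow> int \<times> int) \<Rightarrow> bool" where
  "p_bounded p f r \<longleftrightarrow> (\<forall>i<f. fst (r i) - snd (r i) \<le> int p)"

definition steinberg :: "nat \<Rightarrow> nat \<Rightarrow> (nat \<Rightarrow> int \<times> int) \<Rightarrow> bool" where
  "steinberg p f r \<longleftrightarrow> (\<forall>i<f. fst (r i) - snd (r i) = int p)"

definition hodge_equiv :: "nat \<Rightarrow> nat \<Rightarrow> (nat \<Rightarrow> int \<times> int) \<Rightarrow> (nat \<Rightarrow> int \<times> int) \<Rightarrow> bool" where
  "hodge_equiv p f r r' \<longleftrightarrow>
     (\<exists>lam :: nat \<Rightarrow> int.
        (\<forall>i<f. fst (r' i) = fst (r i) + lam i \<and> snd (r' i) = snd (r i) + lam i) \<and>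
        [(\<Sum>i<f. int p ^ (f - i) * lam i) = 0] (mod (int p ^ f - 1)))"

text \<open>f' = f (principal series) or 2f (cuspidal).\<close>
definition fprime :: "nat \<Rightarrow> bool \<Rightarrow> nat" where
  "fprime f cusp = (if cusp then 2 * f else f)"

text \<open>Non-scalar tame inertial type eta (+) eta' with exponents a, a' (level f').
  Principal series: eta, eta' extend to G_K, i.e. are of level f.
  Cuspidal: eta' = eta^(p^f), of level 2f.\<close>
definition tame_inertial_type :: "nat \<Rightarrow> nat \<Rightarrow> bool \<Rightarrow> int \<Rightarrow> int \<Rightarrow> bool" where
  "tame_inertial_type p f cusp a a' \<longleftrightarrow>
     (let M = int p ^ fprime f cusp - 1 in
       \<not> [a = a'] (mod M) \<and> (cusp \<longrightarrow> [a' = int p ^ f * a] (mod M)))"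

text \<open>gamma_i in [0,p-1] with eta eta'^(-1) = prod_i (omega'_i~)^(gamma_i): the base-p digits
  of (a - a') mod (p^f' - 1), the weight of index i being p^(f'-i) (p^0 for i = 0).\<close>
definition gamma :: "nat \<Rightarrow> nat \<Rightarrow> bool \<Rightarrow> int \<Rightarrow> int \<Rightarrow> nat \<Rightarrow> int" where
  "gamma p f cusp a a' i =
     (let f' = fprime f cusp; M = int p ^ f' - 1 in
       (((a - a') mod M) div (int p ^ ((f' - i) mod f'))) mod int p)"

definition profile :: "nat \<Rightarrow> bool \<Rightarrow> nat set \<Rightarrow> bool" where
  "profile f cusp J \<longleftrightarrow> J \<subseteq> {..<fprime f cusp} \<and>
     (cusp \<longrightarrow> (\<forall>i<2 * f. i \<in> J \<longleftrightarrow> (i + f) mod (2 * f) \<notin> J))"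

definition ind :: "nat set \<Rightarrow> nat \<Rightarrow> int" where
  "ind S i = (if i \<in> S then 1 else 0)"

definition prev_idx :: "nat \<Rightarrow> bool \<Rightarrow> nat \<Rightarrow> nat" where
  "prev_idx f cusp i = (i + fprime f cusp - 1) mod fprime f cusp"

definition s_J :: "nat \<Rightarrow> nat \<Rightarrow> bool \<Rightarrow> int \<Rightarrow> int \<Rightarrow> nat set \<Rightarrow> nat \<Rightarrow> int" where
  "s_J p f cusp a a' J i =
     (if prev_idx f cusp i \<in> J
      then int p - 1 - gamma p f cusp a a' i - ind (- J) i
      else gamma p f cusp a a' i - ind J i)"

definition t_J :: "nat \<Rightarrow> nat \<Rightarrow> bool \<Rightarrow> int \<Rightarrow> int \<Rightarrow> nat set \<Rightarrow> nat \<Rightarrow> int" where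
  "t_J p f cusp a a' J i =
     (if prev_idx f cusp i \<in> J then gamma p f cusp a a' i + ind (- J) i else 0)"

text \<open>theta represents Theta_J = prod_(i<f) omega_i^(theta_i), characterised by
  Theta_J o N_(k'/k) = eta' prod_i (kappa'_i)^(t_(J,i)); N_(k'/k) is x ^ (1 + p^f) in the
  cuspidal case and the identity in the principal series case.\<close>
definition Theta_exps :: "nat \<Rightarrow> nat \<Rightarrow> bool \<Rightarrow> int \<Rightarrow> int \<Rightarrow> nat set \<Rightarrow> (nat \<Rightarrow> int) \<Rightarrow> bool" where
  "Theta_exps p f cusp a a' J \<theta> \<longleftrightarrow>
     (let f' = fprime f cusp in
       [(\<Sum>i<f. int p ^ (f - i) * \<theta> i) * (if cusp then 1 + int p ^ f else 1)
          = a' + (\<Sum>i<f'. int p ^ (f' - i) * t_J p f cusp a a' J i)] (mod (int p ^ f' - 1)))"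

definition r_tau_J :: "nat \<Rightarrow> nat \<Rightarrow> bool \<Rightarrow> int \<Rightarrow> int \<Rightarrow> nat set \<Rightarrow> (nat \<Rightarrow> int) \<Rightarrow> nat \<Rightarrow> int \<times> int" where
  "r_tau_J p f cusp a a' J \<theta> i = (1 - \<theta> i, - s_J p f cusp a a' J i - \<theta> i)"

end

theory Submission
  imports Defs
begin


lemma digits_aux:
  fixes p :: int and c :: "nat \<Rightarrow> int"
  assumes "p > 0" "\<forall>e<n. 0 \<le> c e \<and> c e < p"
  shows "0 \<le> (\<Sum>e<n. c e * p^e) \<and> (\<Sum>e<n. c e * p^e) < p^n \<and>
         (\<forall>e<n. ((\<Sum>e<n. c e * p^e) div p^e) mod p = c e)"
  using assms(2)
proof (induction n arbitrary: c)
  case 0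
  then show ?case by simp
next
  case (Suc n)
  define N where "N = (\<Sum>e<n. c (Suc e) * p^e)"
  have IH: "0 \<le> N \<and> N < p^n \<and> (\<forall>e<n. (N div p^e) mod p = c (Suc e))"
    using Suc.IH[of "\<lambda>e. c (Suc e)"] Suc.prems unfolding N_def by auto
  have eq: "(\<Sum>e<Suc n. c e * p^e) = c 0 + p * N"
    unfolding N_def by (subst sum.lessThan_Suc_shift) (simp add: sum_distrib_left mult_ac del: sum.lessThan_Suc)
  have c0: "0 \<le> c 0" "c 0 < p" using Suc.prems by auto
  have "p * N \<le> p * (p^n - 1)" using IH assms(1) by (intro mult_left_mono) auto
  then have b: "c 0 + p * N < p^Suc n" using c0 by (simp add: algebra_simps)
  have d: "((c 0 + p * N) div p^e) mod p = c e" if "e < Suc n" for e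
  proof (cases e)
    case 0
    then show ?thesis using c0 by simp
  next
    case (Suc e')
    have "(c 0 + p * N) div p^e = ((c 0 + p * N) div p) div p^e'"
      using Suc assms(1) zdiv_zmult2_eq[where a="c 0 + p * N" and b=p and c="p^e'"] by simp
    also have "(c 0 + p * N) div p = N" using c0 assms(1) by simp
    finally show ?thesis using IH Suc that by simp
  qed
  show ?case unfolding eq using IH assms(1) c0 b d by simp
qed

lemma phi_inv: "i < (n::nat) \<Longrightarrow> (n - (n - i) mod n) mod n = i"
  by (cases "i = 0") auto

lemma phi_reindex:
  fixes g :: "nat \<Rightarrow> int"
  shows "(\<Sum>i<n. g i * p^((n-i) mod n)) = (\<Sum>e<n. g ((n-e) mod n) * p^e)"
  apply (rule sum.reindex_bij_witness[where i="\<lambda>i. (n-i) mod n" and j="\<lambda>i. (n-i) mod n"])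
  by (auto simp: phi_inv)

lemma sum_split_add: "(\<Sum>i<m+n. g i) = (\<Sum>i<m. g i) + (\<Sum>i<n. g (i+m::nat))"
  by (induction n) (auto simp: add_ac)

lemma D_lemma:
  fixes p :: int and \<gamma> :: "nat \<Rightarrow> int"
  assumes p: "p > 1" and n: "n > 0" and dig: "\<forall>i<n. 0 \<le> \<gamma> i \<and> \<gamma> i < p"
    and nz: "\<exists>i<n. \<gamma> i \<noteq> 0" and nf: "\<exists>i<n. \<gamma> i \<noteq> p - 1"
  defines "D \<equiv> (\<Sum>e<n. \<gamma> ((n-e) mod n) * p^e)"
  shows "0 < D \<and> D < p^n - 1 \<and> (\<forall>i<n. (D div p^((n-i) mod n)) mod p = \<gamma> i)"
proof -
  define c where "c e = \<gamma> ((n-e) mod n)" for e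
  have cd: "\<forall>e<n. 0 \<le> c e \<and> c e < p" unfolding c_def using dig n by auto
  have A: "0 \<le> D \<and> D < p^n \<and> (\<forall>e<n. (D div p^e) mod p = c e)"
    using digits_aux[OF _ cd] p unfolding D_def c_def by auto
  have gi: "\<gamma> i = c ((n-i) mod n)" if "i < n" for i
    unfolding c_def using phi_inv[OF that] by simp
  have G: "\<forall>i<n. (D div p^((n-i) mod n)) mod p = \<gamma> i"
    using A gi n by auto
  have "D \<noteq> 0"
  proof
    assume "D = 0"
    then have "\<forall>i<n. \<gamma> i = 0" using G by simp
    then show False using nz by auto
  qed
  moreover have "D \<noteq> p^n - 1"
  proof
    assume D1: "D = p^n - 1"
    have e: "p^n - 1 = (\<Sum>e<n. (\<lambda>_. p - 1) e * p^e)"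
      by (simp add: power_diff_1_eq sum_distrib_left)
    have "\<forall>e<n. 0 \<le> (\<lambda>_. p - 1) e \<and> (\<lambda>_. p - 1) e < p" using p by auto
    from digits_aux[OF _ this] p e have "\<forall>e<n. ((p^n - 1) div p^e) mod p = p - 1" by simp
    then have "\<forall>i<n. \<gamma> i = p - 1" using G D1 n by auto
    then show False using nf by auto
  qed
  ultimately show ?thesis using A G by auto
qed

lemma gamma_lemma:
  fixes \<gamma> :: "nat \<Rightarrow> int"
  assumes p: "p > 1" and f: "f \<ge> 1"
    and dig: "\<forall>i<fprime f cusp. 0 \<le> \<gamma> i \<and> \<gamma> i < int p"
    and nz: "\<exists>i<fprime f cusp. \<gamma> i \<noteq> 0" and nf: "\<exists>i<fprime f cusp. \<gamma> i \<noteq> int p - 1"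
    and D: "(a - a') mod (int p ^ fprime f cusp - 1) =
            (\<Sum>e<fprime f cusp. \<gamma> ((fprime f cusp - e) mod fprime f cusp) * int p ^ e)
               mod (int p ^ fprime f cusp - 1)"
  shows "(\<forall>i<fprime f cusp. gamma p f cusp a a' i = \<gamma> i) \<and> \<not> [a = a'] (mod (int p ^ fprime f cusp - 1))"
proof -
  let ?n = "fprime f cusp"
  have n: "?n > 0" using f unfolding fprime_def by auto
  have pp: "int p > 1" using p by simp
  note L = D_lemma[OF pp n dig nz nf]
  let ?D = "(\<Sum>e<?n. \<gamma> ((?n - e) mod ?n) * int p ^ e)"
  have "(a - a') mod (int p ^ ?n - 1) = ?D" using D L by simp
  moreover have "\<not> [a = a'] (mod (int p ^ ?n - 1))"
  proof
    assume "[a = a'] (mod (int p ^ ?n - 1))"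
    then have "(a - a') mod (int p ^ ?n - 1) = 0"
      by (simp add: cong_iff_dvd_diff)
    then show False using L D by simp
  qed
  ultimately show ?thesis using L unfolding gamma_def Let_def by auto
qed



lemma tele:
  fixes q :: int and b :: "nat \<Rightarrow> int"
  shows "(\<Sum>j<Suc m. q^(Suc m-j) * (q * (if j = 0 then b m else 1 - b (j-1)) - (1 - b j))) + q
         = (q^Suc m + 1) * q * b m"
proof -
  have A: "(\<Sum>j<Suc m. q^(Suc m-j) * (q * (if j = 0 then b m else 1 - b (j-1))))
        = q^(Suc (Suc m)) * b m + (\<Sum>k<m. q^(Suc m - k) * (1 - b k))"
  proof -
    have "(\<Sum>j<Suc m. q^(Suc m-j) * (q * (if j = 0 then b m else 1 - b (j-1))))
       = q^(Suc m) * (q * b m) + (\<Sum>k<m. q^(Suc m - Suc k) * (q * (1 - b k)))"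
      by (subst sum.lessThan_Suc_shift) simp
    also have "(\<Sum>k<m. q^(Suc m - Suc k) * (q * (1 - b k))) = (\<Sum>k<m. q^(Suc m - k) * (1 - b k))"
    proof (rule sum.cong)
      fix k assume "k \<in> {..<m}"
      then have "Suc m - k = Suc (Suc m - Suc k)" by auto
      then show "q^(Suc m - Suc k) * (q * (1 - b k)) = q^(Suc m - k) * (1 - b k)" by simp
    qed simp
    finally show ?thesis by (simp add: mult_ac)
  qed
  have B: "(\<Sum>j<Suc m. q^(Suc m-j) * (1 - b j)) = (\<Sum>k<m. q^(Suc m - k) * (1 - b k)) + q * (1 - b m)"
    by simp
  have "(\<Sum>j<Suc m. q^(Suc m-j) * (q * (if j = 0 then b m else 1 - b (j-1)) - (1 - b j)))
      = (\<Sum>j<Suc m. q^(Suc m-j) * (q * (if j = 0 then b m else 1 - b (j-1))))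
        - (\<Sum>j<Suc m. q^(Suc m-j) * (1 - b j))"
    by (simp only: right_diff_distrib sum_subtractf)
  then show ?thesis using A B by (simp add: algebra_simps)
qed

lemma K1:
  fixes q :: int and g :: "nat \<Rightarrow> int"
  assumes "n > 0"
  shows "(\<Sum>i<n. g i * q^((n-i) mod n)) = (\<Sum>i<n. g i * q^(n-i)) - g 0 * (q^n - 1)"
proof -
  obtain m where n: "n = Suc m" using assms by (cases n) auto
  have "(\<Sum>i<n. g i * q^((n-i) mod n)) = g 0 + (\<Sum>i<m. g (Suc i) * q^((n - Suc i) mod n))"
    unfolding n by (subst sum.lessThan_Suc_shift) simp
  also have "(\<Sum>i<m. g (Suc i) * q^((n - Suc i) mod n)) = (\<Sum>i<m. g (Suc i) * q^(n - Suc i))"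
    by (rule sum.cong) (auto simp: n)
  also have "(\<Sum>i<n. g i * q^(n-i)) = g 0 * q^n + (\<Sum>i<m. g (Suc i) * q^(n - Suc i))"
    unfolding n by (subst sum.lessThan_Suc_shift) simp
  ultimately show ?thesis by (simp add: algebra_simps)
qed

lemma geo_shift:
  fixes q :: int
  shows "(q - 1) * (\<Sum>j<f. q^(f-j)) = q * (q^f - 1)"
proof -
  have "(\<Sum>j<f. q^(f-j)) = (\<Sum>j<f. q * q^(f - Suc j))"
    by (rule sum.cong) (auto simp: Suc_diff_Suc[symmetric])
  also have "\<dots> = q * (\<Sum>j<f. q^(f - Suc j))" by (simp add: sum_distrib_left)
  also have "(\<Sum>j<f. q^(f - Suc j)) = (\<Sum>j<f. q^j)" by (rule sum.nat_diff_reindex)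
  finally show ?thesis by (simp add: power_diff_1_eq mult_ac)
qed

lemma K2:
  fixes q :: int and g :: "nat \<Rightarrow> int"
  assumes "\<forall>j<f. g (j+f) = q - 1 - g j"
  shows "(\<Sum>i<2*f. g i * q^(2*f-i)) = (q^f - 1) * ((\<Sum>j<f. g j * q^(f-j)) + q)"
proof -
  have "(\<Sum>i<2*f. g i * q^(2*f-i)) = (\<Sum>i<f+f. g i * q^(2*f-i))" by (simp add: mult_2)
  also have "\<dots> = (\<Sum>i<f. g i * q^(2*f-i)) + (\<Sum>j<f. g (j+f) * q^(2*f-(j+f)))"
    by (rule sum_split_add)
  also have "(\<Sum>i<f. g i * q^(2*f-i)) = q^f * (\<Sum>j<f. g j * q^(f-j))"
    unfolding sum_distrib_left
  proof (rule sum.cong)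
    fix i assume "i \<in> {..<f}"
    then have "2*f - i = f + (f - i)" by auto
    then show "g i * q^(2*f-i) = q^f * (g i * q^(f-i))" by (simp add: power_add)
  qed simp
  also have "(\<Sum>j<f. g (j+f) * q^(2*f-(j+f))) = (\<Sum>j<f. (q - 1) * q^(f-j) - g j * q^(f-j))"
    by (rule sum.cong) (auto simp: assms algebra_simps)
  also have "\<dots> = (q - 1) * (\<Sum>j<f. q^(f-j)) - (\<Sum>j<f. g j * q^(f-j))"
    by (simp add: sum_subtractf sum_distrib_left)
  also have "\<dots> = q * (q^f - 1) - (\<Sum>j<f. g j * q^(f-j))"
    by (simp only: geo_shift)
  finally show ?thesis by (simp add: algebra_simps)
qed



definition tt :: "nat \<Rightarrow> nat \<Rightarrow> bool \<Rightarrow> (nat \<Rightarrow> int) \<Rightarrow> nat set \<Rightarrow> nat \<Rightarrow> int" where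
  "tt p f cusp \<gamma> J i = (if prev_idx f cusp i \<in> J then \<gamma> i + ind (- J) i else 0)"

lemma tJ_eq:
  assumes "\<forall>i<fprime f cusp. gamma p f cusp a a' i = \<gamma> i" "i < fprime f cusp"
  shows "t_J p f cusp a a' J i = tt p f cusp \<gamma> J i"
  using assms unfolding t_J_def tt_def by simp

lemma RP:
  fixes \<gamma> \<theta> :: "nat \<Rightarrow> int"
  assumes p: "p > 1" and f: "f \<ge> 1"
    and dig: "\<forall>i<f. 0 \<le> \<gamma> i \<and> \<gamma> i < int p"
    and nz: "\<exists>i<f. \<gamma> i \<noteq> 0" and nf: "\<exists>i<f. \<gamma> i \<noteq> int p - 1"
  shows "\<exists>a a'. tame_inertial_type p f False a a' \<and> (\<forall>i<f. gamma p f False a a' i = \<gamma> i)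
           \<and> Theta_exps p f False a a' J \<theta>"
proof -
  have fp: "fprime f False = f" by (simp add: fprime_def)
  define S where "S = (\<Sum>i<f. int p^(f-i) * tt p f False \<gamma> J i)"
  define T where "T = (\<Sum>i<f. int p^(f-i) * \<theta> i)"
  define D where "D = (\<Sum>e<f. \<gamma>((f-e) mod f) * int p^e)"
  define a' where "a' = T - S"
  define a where "a = a' + D"
  have "(a - a') mod (int p ^ fprime f False - 1) =
            (\<Sum>e<fprime f False. \<gamma> ((fprime f False - e) mod fprime f False) * int p ^ e)
               mod (int p ^ fprime f False - 1)"
    unfolding fp a_def D_def by simp
  from gamma_lemma[OF p f _ _ _ this] dig nz nf fp
  have G: "(\<forall>i<f. gamma p f False a a' i = \<gamma> i)" and NS: "\<not> [a = a'] (mod (int p ^ f - 1))"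
    by auto
  have "(\<Sum>i<f. int p ^ (f - i) * t_J p f False a a' J i) = S"
    unfolding S_def by (rule sum.cong) (use G tJ_eq[of f False p a a' \<gamma>] fp in auto)
  then have TH: "Theta_exps p f False a a' J \<theta>"
    unfolding Theta_exps_def Let_def fp by (simp add: T_def[symmetric] a'_def)
  have "tame_inertial_type p f False a a'"
    unfolding tame_inertial_type_def Let_def fp using NS by simp
  then show ?thesis using G TH by blast
qed



lemma RC:
  fixes \<gamma> \<theta> :: "nat \<Rightarrow> int"
  assumes p: "p > 1" and f: "f \<ge> 1" and prof: "profile f True J"
    and dig: "\<forall>i<2*f. 0 \<le> \<gamma> i \<and> \<gamma> i < int p"
    and comp: "\<forall>j<f. \<gamma> (j+f) = int p - 1 - \<gamma> j"
  shows "\<exists>a a'. tame_inertial_type p f True a a' \<and> (\<forall>i<2*f. gamma p f True a a' i = \<gamma> i)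
           \<and> Theta_exps p f True a a' J \<theta>"
proof -
  have fp: "fprime f True = 2*f" by (simp add: fprime_def)
  define q where "q = int p"
  define P where "P = q^f"
  define M where "M = q^(2*f) - 1"
  have MP: "M = (P - 1) * (P + 1)"
    unfolding M_def P_def by (simp add: power_mult power2_eq_square algebra_simps)
  obtain m where fm: "f = Suc m" using f by (cases f) auto
  define S where "S = (\<Sum>i<2*f. q^(2*f-i) * tt p f True \<gamma> J i)"
  define T where "T = (\<Sum>i<f. q^(f-i) * \<theta> i)"
  define D where "D = (\<Sum>e<2*f. \<gamma>((2*f-e) mod (2*f)) * q^e)"
  define X where "X = (\<Sum>j<f. \<gamma> j * q^(f-j))"
  define Y where "Y = (\<Sum>j<f. q^(f-j) * tt p f True \<gamma> J j) + q * ind J m"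
  define a where "a = S + (P+1)*(T-S)"
  define a' where "a' = P * a"
  have Jsym: "\<And>j. j < f \<Longrightarrow> (j + f \<in> J) = (j \<notin> J)"
  proof -
    fix j assume j: "j < f"
    have "(j + f) mod (2*f) = j + f" using j by auto
    moreover have "(j + f + f) mod (2*f) = j" using j by (simp add: mult_2[symmetric] add.assoc)
    moreover have "j + f < 2*f" using j by simp
    moreover have "\<forall>i<2 * f. (i \<in> J) = ((i + f) mod (2 * f) \<notin> J)" using prof unfolding profile_def by blast
    ultimately have "(j + f \<in> J) = ((j + f + f) mod (2*f) \<notin> J)" by blast
    then show "(j + f \<in> J) = (j \<notin> J)" using \<open>(j + f + f) mod (2*f) = j\<close> by simp
  qed
  have prev0: "prev_idx f True 0 = m + f" unfolding prev_idx_def fprime_def fm by simp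
  have prevS: "prev_idx f True (Suc k) = k" if "Suc k < f" for k
    unfolding prev_idx_def fprime_def using that by simp
  have prevf: "prev_idx f True (j + f) = (if j = 0 then m else (j - 1) + f)" if "j < f" for j
  proof -
    have "prev_idx f True (j + f) = ((j + f - 1) + 2*f) mod (2*f)"
      unfolding prev_idx_def fprime_def using fm by (simp add: algebra_simps)
    also have "\<dots> = j + f - 1" by (subst mod_add_self2) (use that in simp)
    finally show ?thesis using fm by (cases j) auto
  qed
  have ttj: "tt p f True \<gamma> J j = (if (if j = 0 then m \<notin> J else j - 1 \<in> J) then \<gamma> j + (1 - ind J j) else 0)"
    if "j < f" for j
  proof (cases j)
    case 0
    have "prev_idx f True 0 \<in> J \<longleftrightarrow> m \<notin> J" unfolding prev0 using Jsym[of m] fm by simp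
    then show ?thesis using 0 unfolding tt_def by (simp add: ind_def)
  next
    case (Suc k)
    then show ?thesis unfolding tt_def using prevS[of k] that by (simp add: ind_def)
  qed
  have ttjf: "tt p f True \<gamma> J (j + f) = (if (if j = 0 then m \<in> J else j - 1 \<notin> J) then q - 1 - \<gamma> j + ind J j else 0)"
    if "j < f" for j
  proof -
    have c1: "(prev_idx f True (j + f) \<in> J) = (if j = 0 then m \<in> J else j - 1 \<notin> J)"
    proof (cases "j = 0")
      case True then show ?thesis using prevf[OF that] by simp
    next
      case False
      then have "j - 1 < f" using that by simp
      then show ?thesis using prevf[OF that] False Jsym[of "j - 1"] by simp
    qed
    have c2: "\<gamma> (j + f) = q - 1 - \<gamma> j" using comp that q_def by simp
    have c3: "ind (- J) (j + f) = ind J j" using Jsym[OF that] by (simp add: ind_def)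
    show ?thesis unfolding tt_def c1 c2 c3 ..
  qed
  have perj: "tt p f True \<gamma> J (j + f) - tt p f True \<gamma> J j + \<gamma> j
              = q * (if j = 0 then ind J m else 1 - ind J (j-1)) - (1 - ind J j)" if "j < f" for j
    unfolding ttj[OF that] ttjf[OF that] by (auto simp: ind_def)
  have Ssplit: "S = (\<Sum>j<f. q^(f-j) * (P * tt p f True \<gamma> J j + tt p f True \<gamma> J (j + f)))"
  proof -
    have "S = (\<Sum>i<f+f. q^(2*f-i) * tt p f True \<gamma> J i)" unfolding S_def by (simp add: mult_2)
    also have "\<dots> = (\<Sum>i<f. q^(2*f-i) * tt p f True \<gamma> J i) + (\<Sum>j<f. q^(2*f-(j+f)) * tt p f True \<gamma> J (j+f))"
      by (rule sum_split_add)
    also have "\<dots> = (\<Sum>j<f. q^(f-j) * (P * tt p f True \<gamma> J j + tt p f True \<gamma> J (j + f)))"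
      unfolding sum.distrib[symmetric]
    proof (rule sum.cong)
      fix j assume "j \<in> {..<f}"
      then have e1: "2*f - j = f + (f - j)" and e2: "2*f - (j+f) = f - j" by auto
      show "q^(2*f-j) * tt p f True \<gamma> J j + q^(2*f-(j+f)) * tt p f True \<gamma> J (j+f)
            = q^(f-j) * (P * tt p f True \<gamma> J j + tt p f True \<gamma> J (j + f))"
        unfolding e1 e2 P_def by (simp add: power_add algebra_simps)
    qed simp
    finally show ?thesis .
  qed
  have K3: "S + X + q = (P + 1) * Y"
  proof -
    have "S + X + q - (P + 1) * Y =
          (\<Sum>j<f. q^(f-j) * (tt p f True \<gamma> J (j + f) - tt p f True \<gamma> J j + \<gamma> j)) + q - (P+1) * q * ind J m"
      unfolding Ssplit X_def Y_def
      by (simp add: algebra_simps sum.distrib sum_distrib_left sum_subtractf)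
    also have "(\<Sum>j<f. q^(f-j) * (tt p f True \<gamma> J (j + f) - tt p f True \<gamma> J j + \<gamma> j))
             = (\<Sum>j<Suc m. q^(Suc m-j) * (q * (if j = 0 then ind J m else 1 - ind J (j-1)) - (1 - ind J j)))"
      unfolding fm[symmetric] by (rule sum.cong) (use perj in auto)
    finally show ?thesis using tele[of q m "ind J"] unfolding P_def fm by simp
  qed
  have D1: "D = (\<Sum>i<2*f. \<gamma> i * q^((2*f-i) mod (2*f)))"
    unfolding D_def by (rule phi_reindex[symmetric])
  have D2: "D = (P - 1) * (X + q) - \<gamma> 0 * M"
  proof -
    have "D = (\<Sum>i<2*f. \<gamma> i * q^(2*f-i)) - \<gamma> 0 * (q^(2*f)-1)"
      unfolding D1 by (rule K1) (use f in simp)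
    also have "(\<Sum>i<2*f. \<gamma> i * q^(2*f-i)) = (q^f-1)*(X+q)"
      unfolding X_def by (rule K2) (use comp q_def in simp)
    finally show ?thesis unfolding M_def P_def .
  qed
  have key: "(a - a') - D = M * (\<gamma> 0 - Y - (T - S))"
  proof -
    have "(a - a') - D = (1 - P) * (S + X + q) - (P - 1) * (P + 1) * (T - S) + \<gamma> 0 * M"
      unfolding a'_def a_def D2 by (simp add: algebra_simps)
    also have "\<dots> = M * (\<gamma> 0 - Y - (T - S))"
      unfolding K3 MP by (simp add: algebra_simps)
    finally show ?thesis .
  qed
  have "(a - a') mod (int p ^ fprime f True - 1) =
            (\<Sum>e<fprime f True. \<gamma> ((fprime f True - e) mod fprime f True) * int p ^ e)
               mod (int p ^ fprime f True - 1)"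
  proof -
    have "[a - a' = D] (mod M)" unfolding cong_iff_dvd_diff key by simp
    then show ?thesis unfolding fp D_def M_def q_def cong_def .
  qed
  moreover have dig': "\<forall>i<fprime f True. 0 \<le> \<gamma> i \<and> \<gamma> i < int p" using dig fp by simp
  moreover have "\<exists>i<fprime f True. \<gamma> i \<noteq> 0"
  proof (cases "\<gamma> 0 = 0")
    case True
    then have "\<gamma> f \<noteq> 0" using comp[rule_format, of 0] f p by simp
    then show ?thesis using fp f by (intro exI[of _ f]) simp
  next
    case False
    then show ?thesis using fp f by (intro exI[of _ 0]) simp
  qed
  moreover have "\<exists>i<fprime f True. \<gamma> i \<noteq> int p - 1"
  proof (cases "\<gamma> 0 = int p - 1")
    case True
    then have "\<gamma> f \<noteq> int p - 1" using comp[rule_format, of 0] f p by simp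
    then show ?thesis using fp f by (intro exI[of _ f]) simp
  next
    case False
    then show ?thesis using fp f by (intro exI[of _ 0]) simp
  qed
  ultimately have G: "(\<forall>i<2*f. gamma p f True a a' i = \<gamma> i)" and NS: "\<not> [a = a'] (mod M)"
    using gamma_lemma[OF p f, of True \<gamma> a a'] fp unfolding M_def q_def by auto
  have "(\<Sum>i<2*f. int p ^ (2*f - i) * t_J p f True a a' J i) = S"
    unfolding S_def q_def by (rule sum.cong) (use G tJ_eq[of f True p a a' \<gamma>] fp in auto)
  moreover have "[T * (1 + P) = a' + S] (mod M)"
  proof -
    have "T * (1 + P) - (a' + S) = M * (S - T)"
      unfolding a'_def a_def MP by (simp add: algebra_simps)
    then show ?thesis unfolding cong_iff_dvd_diff by simp
  qed
  ultimately have TH: "Theta_exps p f True a a' J \<theta>"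
    unfolding Theta_exps_def Let_def fp T_def P_def M_def q_def by simp
  have "tame_inertial_type p f True a a'"
    unfolding tame_inertial_type_def Let_def fp using NS unfolding M_def q_def a'_def P_def
    by simp
  then show ?thesis using G TH by blast
qed



fun bseq :: "(nat \<Rightarrow> bool) \<Rightarrow> nat \<Rightarrow> bool" where
  "bseq C 0 = False"
| "bseq C (Suc i) = (bseq C i \<noteq> C (Suc i))"

lemma bseq_flip:
  assumes "\<forall>x. C' x = (C x \<noteq> (x = i1))"
  shows "bseq C' i = (bseq C i \<noteq> (0 < i1 \<and> i1 \<le> i))"
proof (induction i)
  case 0
  then show ?case by auto
next
  case (Suc i)
  have "C' (Suc i) = (C (Suc i) \<noteq> (Suc i = i1))" using assms by blast
  then show ?case using Suc.IH by (cases "i1 = Suc i") auto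
qed

lemma s_J_calc:
  assumes "gamma p f cusp a a' i = (if pm then (if bi then int p - d else int p - 1 - d)
                                    else (if bi then d else d - 1))"
    and "(prev_idx f cusp i \<in> J) = pm" and "(i \<in> J) = bi"
  shows "s_J p f cusp a a' J i = d - 1"
  unfolding s_J_def assms(2) ind_def using assms(1,3) by (cases pm; cases bi) auto

lemma main_construct:
  fixes d \<theta> :: "nat \<Rightarrow> int" and C :: "nat \<Rightarrow> bool"
  assumes p: "p > 2" and f: "f \<ge> 1"
    and drange: "\<forall>i<f. 0 \<le> d i \<and> d i \<le> int p"
    and c1: "\<forall>i<f. d i = 0 \<longrightarrow> C i" and c2: "\<forall>i<f. d i = int p \<longrightarrow> \<not> C i"
    and cusp: "cusp = (bseq C (f - 1) \<noteq> C 0)"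
    and c3: "\<not> cusp \<longrightarrow> (\<forall>i<f. d i = 0 \<or> d i = int p)"
    and c4: "\<exists>i<f. d i \<noteq> int p"
  shows "\<exists>a a' J. tame_inertial_type p f cusp a a' \<and> profile f cusp J \<and>
           Theta_exps p f cusp a a' J \<theta> \<and> (\<forall>i<f. s_J p f cusp a a' J i = d i - 1)"
proof -
  define m where "m = f - 1"
  have fm: "f = Suc m" using f m_def by simp
  define b where "b = bseq C"
  define pm where "pm i = (if i = 0 then (if cusp then \<not> b m else b m) else b (i - 1))" for i
  define G where "G i = (if pm i then (if b i then int p - d i else int p - 1 - d i)
                          else (if b i then d i else d i - 1))" for i
  have change: "(pm i \<noteq> b i) = C i" if "i < f" for i
  proof (cases i)
    case 0
    then show ?thesis using cusp unfolding pm_def b_def m_def by auto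
  next
    case (Suc k)
    then show ?thesis unfolding pm_def b_def by auto
  qed
  have lo: "0 < d i" if "i < f" "\<not> C i" for i
    using c1[rule_format, OF that(1)] drange[rule_format, OF that(1)] that(2) by (auto simp: less_le)
  have hi: "d i < int p" if "i < f" "C i" for i
    using c2[rule_format, OF that(1)] drange[rule_format, OF that(1)] that(2) by (auto simp: less_le)
  have Gdig: "0 \<le> G i \<and> G i < int p" if "i < f" for i
    using change[OF that] lo[OF that] hi[OF that] drange[rule_format, OF that] p
    unfolding G_def by (cases "pm i"; cases "b i") auto
  show ?thesis
  proof (cases cusp)
    case True
    define J where "J = {i. i < f \<and> b i} \<union> {i. f \<le> i \<and> i < 2*f \<and> \<not> b (i - f)}"
    define \<gamma> where "\<gamma> i = (if i < f then G i else int p - 1 - G (i - f))" for i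
    have prof: "profile f True J"
      unfolding profile_def fprime_def
    proof (intro conjI impI allI)
      show "J \<subseteq> {..<(if True then 2 * f else f)}" unfolding J_def by auto
      fix i assume i: "i < 2 * f"
      show "(i \<in> J) = ((i + f) mod (2 * f) \<notin> J)"
      proof (cases "i < f")
        case True
        then have "(i + f) mod (2*f) = i + f" by simp
        then show ?thesis unfolding J_def using True by auto
      next
        case False
        have "i + f = (i - f) + 2*f" using False by simp
        then have "(i + f) mod (2*f) = ((i - f) + 2*f) mod (2*f)" by (simp only:)
        also have "\<dots> = i - f" by (subst mod_add_self2) (use i in simp)
        finally have "(i + f) mod (2*f) = i - f" .
        then show ?thesis unfolding J_def using False i by auto
      qed
    qed
    have dig: "\<forall>i<2*f. 0 \<le> \<gamma> i \<and> \<gamma> i < int p"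
    proof (intro allI impI)
      fix i assume i: "i < 2*f"
      show "0 \<le> \<gamma> i \<and> \<gamma> i < int p"
      proof (cases "i < f")
        case True then show ?thesis using Gdig[of i] unfolding \<gamma>_def by auto
      next
        case False
        then have "i - f < f" using i by simp
        then show ?thesis using Gdig[of "i - f"] False unfolding \<gamma>_def by auto
      qed
    qed
    have comp: "\<forall>j<f. \<gamma> (j+f) = int p - 1 - \<gamma> j" unfolding \<gamma>_def by auto
    obtain a a' where A: "tame_inertial_type p f True a a'" "\<forall>i<2*f. gamma p f True a a' i = \<gamma> i"
      "Theta_exps p f True a a' J \<theta>"
      using RC[OF _ f prof dig comp, of \<theta>] p by auto
    have S: "s_J p f True a a' J i = d i - 1" if i: "i < f" for i
    proof (rule s_J_calc)
      show "gamma p f True a a' i = (if pm i then (if b i then int p - d i else int p - 1 - d i)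
                                    else (if b i then d i else d i - 1))"
        using A(2) i unfolding \<gamma>_def G_def by simp
      show "(i \<in> J) = b i" unfolding J_def using i by auto
      show "(prev_idx f True i \<in> J) = pm i"
      proof (cases i)
        case 0
        have "prev_idx f True i = m + f" unfolding prev_idx_def fprime_def 0 fm by simp
        then show ?thesis unfolding J_def pm_def using 0 True fm by auto
      next
        case (Suc k)
        have "prev_idx f True i = k" unfolding prev_idx_def fprime_def using Suc i by simp
        then show ?thesis unfolding J_def pm_def using Suc i by auto
      qed
    qed
    have "cusp = True" using True by simp
    then show ?thesis using A prof S by blast
  next
    case False
    define J where "J = {i. i < f \<and> b i}"
    have prof: "profile f False J" unfolding profile_def fprime_def J_def by auto
    have dig: "\<forall>i<f. 0 \<le> G i \<and> G i < int p" using Gdig by auto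
    have d01: "d i = 0 \<or> d i = int p" if "i < f" for i using c3 False that by auto
    have G0: "G i = 0" if "i < f" "b i" for i
      using change[OF that(1)] c1[rule_format, OF that(1)] c2[rule_format, OF that(1)] d01[OF that(1)] that(2)
      unfolding G_def by (cases "pm i") auto
    have nz: "\<exists>i<f. G i \<noteq> 0"
    proof -
      have "G 0 = int p - 1"
        using change[of 0] c1[rule_format, of 0] c2[rule_format, of 0] d01[of 0] f
        unfolding G_def b_def by (cases "pm 0") auto
      then show ?thesis using f p by (intro exI[of _ 0]) auto
    qed
    have nf: "\<exists>i<f. G i \<noteq> int p - 1"
    proof -
      obtain i0 where i0: "i0 < f" "d i0 \<noteq> int p" using c4 by auto
      then have "d i0 = 0" using d01 by auto
      then have ch: "pm i0 \<noteq> b i0" using change[OF i0(1)] c1 i0 by auto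
      have "\<exists>i<f. b i"
      proof (cases "b i0")
        case True then show ?thesis using i0 by auto
      next
        case bF: False
        then have "pm i0" using ch by simp
        then show ?thesis
        proof (cases i0)
          case 0
          then have "b m" using \<open>pm i0\<close> False unfolding pm_def by simp
          then show ?thesis using fm by auto
        next
          case (Suc k)
          then have "b k" using \<open>pm i0\<close> unfolding pm_def by simp
          then show ?thesis using Suc i0 by (intro exI[of _ k]) auto
        qed
      qed
      then obtain i where "i < f" "b i" by auto
      then show ?thesis using G0 p by (intro exI[of _ i]) auto
    qed
    obtain a a' where A: "tame_inertial_type p f False a a'" "\<forall>i<f. gamma p f False a a' i = G i"
      "Theta_exps p f False a a' J \<theta>"
      using RP[OF _ f dig nz nf, of J \<theta>] p by auto
    have S: "s_J p f False a a' J i = d i - 1" if i: "i < f" for i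
    proof (rule s_J_calc)
      show "gamma p f False a a' i = (if pm i then (if b i then int p - d i else int p - 1 - d i)
                                    else (if b i then d i else d i - 1))"
        using A(2) i unfolding G_def by simp
      show "(i \<in> J) = b i" unfolding J_def using i by auto
      show "(prev_idx f False i \<in> J) = pm i"
      proof (cases i)
        case 0
        have "prev_idx f False i = m" unfolding prev_idx_def fprime_def 0 fm by simp
        then show ?thesis unfolding J_def pm_def using 0 False fm by auto
      next
        case (Suc k)
        have "prev_idx f False i = k" unfolding prev_idx_def fprime_def using Suc i by simp
        then show ?thesis unfolding J_def pm_def using Suc i by auto
      qed
    qed
    have "cusp = False" using False by simp
    then show ?thesis using A prof S by blast
  qed
qed



lemma final_from:
  assumes "\<forall>i<f. s_J p f cusp a a' J i = (fst (r i) - snd (r i)) - 1"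
  shows "hodge_equiv p f r (r_tau_J p f cusp a a' J (\<lambda>i. 1 - fst (r i)))"
  unfolding hodge_equiv_def r_tau_J_def
  by (rule exI[of _ "\<lambda>_. 0"]) (use assms in auto)

theorem proposition4p11:
  fixes p f :: nat and r :: "nat \<Rightarrow> int \<times> int"
  assumes "prime p" and "p > 2" and "f \<ge> 1"
    and "hodge_type f r" and "p_bounded p f r" and "\<not> steinberg p f r"
  shows "\<exists>cusp a a' J \<theta>. tame_inertial_type p f cusp a a' \<and> profile f cusp J \<and>
           Theta_exps p f cusp a a' J \<theta> \<and> hodge_equiv p f r (r_tau_J p f cusp a a' J \<theta>)"
proof -
  define d where "d i = fst (r i) - snd (r i)" for i
  define \<theta> where "\<theta> i = 1 - fst (r i)" for i
  have drange: "\<forall>i<f. 0 \<le> d i \<and> d i \<le> int p"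
    using assms(4,5) unfolding hodge_type_def p_bounded_def d_def by auto
  have c4: "\<exists>i<f. d i \<noteq> int p" using assms(6) unfolding steinberg_def d_def by auto
  define Z where "Z i = (d i = 0)" for i
  have p0: "int p \<noteq> 0" using assms(2) by simp
  have "\<exists>C cusp. (\<forall>i<f. d i = 0 \<longrightarrow> C i) \<and> (\<forall>i<f. d i = int p \<longrightarrow> \<not> C i) \<and>
          cusp = (bseq C (f - 1) \<noteq> C 0) \<and> (\<not> cusp \<longrightarrow> (\<forall>i<f. d i = 0 \<or> d i = int p))"
  proof (cases "(bseq Z (f - 1) \<noteq> Z 0) \<or> (\<forall>i<f. d i = 0 \<or> d i = int p)")
    case True
    show ?thesis
      by (rule exI[of _ Z], rule exI[of _ "bseq Z (f - 1) \<noteq> Z 0"]) (use True p0 in \<open>auto simp: Z_def\<close>)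
  next
    case False
    then obtain i1 where i1: "i1 < f" "d i1 \<noteq> 0" "d i1 \<noteq> int p" by auto
    from False have bz: "bseq Z (f - 1) = Z 0" by auto
    define C' where "C' x = (Z x \<noteq> (x = i1))" for x
    have fl: "bseq C' (f - 1) = (bseq Z (f - 1) \<noteq> (0 < i1 \<and> i1 \<le> f - 1))"
      by (rule bseq_flip) (simp add: C'_def)
    have cu: "bseq C' (f - 1) \<noteq> C' 0"
      using fl bz i1(1) unfolding C'_def by (cases "i1 = 0") auto
    show ?thesis
      by (rule exI[of _ C'], rule exI[of _ True]) (use cu i1 p0 in \<open>auto simp: C'_def Z_def\<close>)
  qed
  then obtain C cusp where C: "\<forall>i<f. d i = 0 \<longrightarrow> C i" "\<forall>i<f. d i = int p \<longrightarrow> \<not> C i"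
    "cusp = (bseq C (f - 1) \<noteq> C 0)" "\<not> cusp \<longrightarrow> (\<forall>i<f. d i = 0 \<or> d i = int p)" by blast
  obtain a a' J where R: "tame_inertial_type p f cusp a a'" "profile f cusp J"
    "Theta_exps p f cusp a a' J \<theta>" "\<forall>i<f. s_J p f cusp a a' J i = d i - 1"
    using main_construct[OF assms(2,3) drange C c4, of \<theta>] by blast
  have "hodge_equiv p f r (r_tau_J p f cusp a a' J \<theta>)"
    unfolding \<theta>_def by (rule final_from) (use R(4) in \<open>simp add: d_def\<close>)
  then show ?thesis using R by blast
qed


end
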